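(* Let $f_1,f_2:[0,1]\to[0,1]$ be continuous functions such that $f_1(0)=f_2(0)=0$ and $f_1(1)=f_2(1)=1$. If $f_1\in\mathcal U$, then there exist continuous functions $g_1,g_2:[0,1]\to[0,1]$ such that $g_1(0)=g_2(0)=0$, $g_1(1)=g_2(1)=1$, and $f_1\circ g_1=f_2\circ g_2$.
   Context: A function $f:[0,1]\to\mathbb{R}$ is called piecewise monotone if there is a partition of $[0,1]$ into finitely many subintervals on each of which $f$ is strictly increasing or strictly decreasing. $\mathcal U$ denotes the set of piecewise monotone continuous functions $f:[0,1]\to[0,1]$ with the property that, for every $c\in[0,1]$, the set $f^{-1}(c)$ does not contain both a local maximum point and a local minimum point of $f$. *)

theory Defs
  imports "HOL-Analysis.Analysis"
begin

definition piecewise_monotone :: "(real \<Rightarrow> real) \<Rightarrow> bool" where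
  "piecewise_monotone f \<longleftrightarrow>
     (\<exists>(x :: nat \<Rightarrow> real) n. n \<ge> 1 \<and> x 0 = 0 \<and> x n = 1 \<and>
        (\<forall>i<n. x i < x (Suc i)) \<and>
        (\<forall>i<n. strict_mono_on {x i..x (Suc i)} f \<or> strict_antimono_on {x i..x (Suc i)} f))"

definition local_max_point :: "(real \<Rightarrow> real) \<Rightarrow> real \<Rightarrow> bool" where
  "local_max_point f p \<longleftrightarrow> p \<in> {0..1} \<and>
     (\<exists>e>0. \<forall>y\<in>{0..1}. \<bar>y - p\<bar> < e \<longrightarrow> f y \<le> f p)"

definition local_min_point :: "(real \<Rightarrow> real) \<Rightarrow> real \<Rightarrow> bool" where
  "local_min_point f p \<longleftrightarrow> p \<in> {0..1} \<and>
     (\<exists>e>0. \<forall>y\<in>{0..1}. \<bar>y - p\<bar> < e \<longrightarrow> f p \<le> f y)"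

definition class_U :: "(real \<Rightarrow> real) set" where
  "class_U = {f. piecewise_monotone f \<and> continuous_on {0..1} f \<and> f ` {0..1} \<subseteq> {0..1} \<and>
     (\<forall>c\<in>{0..1}. \<not> ((\<exists>p. local_max_point f p \<and> f p = c) \<and>
                         (\<exists>q. local_min_point f q \<and> f q = c)))}"

end

theory Submission
  imports Defs
begin

definition SS :: "(real \<Rightarrow> real) \<Rightarrow> (real \<Rightarrow> real) \<Rightarrow> (real \<times> real) set" where
  "SS f F = {st. fst st \<in> {0..1} \<and> snd st \<in> {0..1} \<and> f (fst st) = F (snd st)}"

definition UNI :: "(real \<Rightarrow> real) \<Rightarrow> bool" where
  "UNI f \<longleftrightarrow> (\<forall>F. continuous_on {0..1} F \<longrightarrow> F ` {0..1} \<subseteq> {0..1} \<longrightarrow> F 0 = 0 \<longrightarrow> F 1 = 1 \<longrightarrow>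
     (\<exists>g1 g2 :: real \<Rightarrow> real.
           continuous_on {0..1} g1 \<and> g1 ` {0..1} \<subseteq> {0..1} \<and>
           continuous_on {0..1} g2 \<and> g2 ` {0..1} \<subseteq> {0..1} \<and>
           g1 0 = 0 \<and> g2 0 = 0 \<and> g1 1 = 1 \<and> g2 1 = 1 \<and>
           (\<forall>t\<in>{0..1}. f (g1 t) = F (g2 t))))"

lemma bridge:
  assumes "path_component (SS f F) (0,0) (1,1)"
  shows "\<exists>g1 g2 :: real \<Rightarrow> real.
           continuous_on {0..1} g1 \<and> g1 ` {0..1} \<subseteq> {0..1} \<and>
           continuous_on {0..1} g2 \<and> g2 ` {0..1} \<subseteq> {0..1} \<and>
           g1 0 = 0 \<and> g2 0 = 0 \<and> g1 1 = 1 \<and> g2 1 = 1 \<and>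
           (\<forall>t\<in>{0..1}. f (g1 t) = F (g2 t))"
proof -
  obtain g where g: "path g" "path_image g \<subseteq> SS f F" "pathstart g = (0,0)" "pathfinish g = (1,1)"
    using assms unfolding path_component_def by blast
  have c: "continuous_on {0..1} g" using g(1) unfolding path_def .
  have mem: "\<And>t. t \<in> {0..1} \<Longrightarrow> g t \<in> SS f F" using g(2) unfolding path_image_def by auto
  have c1: "continuous_on {0..1} (\<lambda>t. fst (g t))" using c by (intro continuous_intros)
  have c2: "continuous_on {0..1} (\<lambda>t. snd (g t))" using c by (intro continuous_intros)
  have m: "\<And>t. t \<in> {0..1} \<Longrightarrow> fst (g t) \<in> {0..1} \<and> snd (g t) \<in> {0..1} \<and> f (fst (g t)) = F (snd (g t))"
    using mem unfolding SS_def by blast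
  have e: "g 0 = (0,0)" "g 1 = (1,1)" using g(3,4) unfolding pathstart_def pathfinish_def by auto
  show ?thesis
    apply (rule exI[where x="\<lambda>t. fst (g t)"], rule exI[where x="\<lambda>t. snd (g t)"])
    using c1 c2 m e by (simp add: image_subset_iff)
qed

lemma compose_UNI:
  assumes "UNI f'" "UNI Z" "\<forall>s\<in>{0..1}. f s = f' (Z s)"
  shows "UNI f"
  unfolding UNI_def
proof (intro allI impI)
  fix F :: "real \<Rightarrow> real"
  assume F: "continuous_on {0..1} F" "F ` {0..1} \<subseteq> {0..1}" "F 0 = 0" "F 1 = 1"
  obtain g1 g2 :: "real \<Rightarrow> real" where g: "continuous_on {0..1} g1" "g1 ` {0..1} \<subseteq> {0..1}"
           "continuous_on {0..1} g2" "g2 ` {0..1} \<subseteq> {0..1}"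
           "g1 0 = 0" "g2 0 = 0" "g1 1 = 1" "g2 1 = 1" "\<forall>t\<in>{0..1}. f' (g1 t) = F (g2 t)"
    using assms(1)[unfolded UNI_def, rule_format, OF F] by blast
  obtain h1 h2 :: "real \<Rightarrow> real" where h: "continuous_on {0..1} h1" "h1 ` {0..1} \<subseteq> {0..1}"
           "continuous_on {0..1} h2" "h2 ` {0..1} \<subseteq> {0..1}"
           "h1 0 = 0" "h2 0 = 0" "h1 1 = 1" "h2 1 = 1" "\<forall>t\<in>{0..1}. Z (h1 t) = g1 (h2 t)"
    using assms(2)[unfolded UNI_def, rule_format, OF g(1,2,5,7)] by blast
  show "\<exists>G1 G2 :: real \<Rightarrow> real.
           continuous_on {0..1} G1 \<and> G1 ` {0..1} \<subseteq> {0..1} \<and>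
           continuous_on {0..1} G2 \<and> G2 ` {0..1} \<subseteq> {0..1} \<and>
           G1 0 = 0 \<and> G2 0 = 0 \<and> G1 1 = 1 \<and> G2 1 = 1 \<and>
           (\<forall>t\<in>{0..1}. f (G1 t) = F (G2 t))"
  proof -
    have c: "continuous_on {0..1} (\<lambda>t. g2 (h2 t))"
      using continuous_on_compose2[OF g(3) h(3) h(4)] .
    have r: "(\<lambda>t. g2 (h2 t)) ` {0..1} \<subseteq> {0..1}" using g(4) h(4) by auto
    have e: "\<forall>t\<in>{0..1}. f (h1 t) = F (g2 (h2 t))"
    proof
      fix t :: real assume t: "t \<in> {0..1}"
      have "h1 t \<in> {0..1}" using h(2) t by blast
      then have "f (h1 t) = f' (Z (h1 t))" using assms(3) by blast
      also have "\<dots> = f' (g1 (h2 t))" using h(9) t by simp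
      also have "\<dots> = F (g2 (h2 t))" using g(9) h(4) t by blast
      finally show "f (h1 t) = F (g2 (h2 t))" .
    qed
    show ?thesis
      apply (rule exI[where x=h1], rule exI[where x="\<lambda>t. g2 (h2 t)"])
      using c r e h(1,2,5,7) g(6,8) h(6,8) by simp
  qed
qed

lemma track:
  fixes f F :: "real \<Rightarrow> real"
  assumes "continuous_on {c..d} f" "inj_on f {c..d}" "0 \<le> c" "d \<le> 1"
   "continuous_on {0..1} F" "0 \<le> t0" "t0 \<le> t1" "t1 \<le> 1"
   "\<forall>t\<in>{t0..t1}. F t \<in> f ` {c..d}"
   "s0 \<in> {c..d}" "s1 \<in> {c..d}" "f s0 = F t0" "f s1 = F t1"
 shows "path_component (SS f F) (s0,t0) (s1,t1)"
proof -
  define \<phi> where "\<phi> = inv_into {c..d} f"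
  have phic: "continuous_on (f ` {c..d}) \<phi>"
    unfolding \<phi>_def
    by (rule continuous_on_inv[OF assms(1) compact_Icc]) (simp add: inv_into_f_f[OF assms(2)])
  have Fc: "continuous_on {t0..t1} F" using assms(5) by (rule continuous_on_subset) (use assms(6,8) in auto)
  have hc: "continuous_on {t0..t1} (\<lambda>t. (\<phi> (F t), t))"
  proof (rule continuous_on_Pair)
    show "continuous_on {t0..t1} (\<lambda>t. \<phi> (F t))"
      by (rule continuous_on_compose2[OF phic Fc]) (use assms(9) in blast)
  qed (rule continuous_on_id)
  have pc: "path_connected ((\<lambda>t. (\<phi> (F t), t)) ` {t0..t1})"
    by (rule path_connected_continuous_image[OF hc]) (rule convex_imp_path_connected[OF convex_closed_interval])
  have sub: "(\<lambda>t. (\<phi> (F t), t)) ` {t0..t1} \<subseteq> SS f F"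
  proof
    fix z assume "z \<in> (\<lambda>t. (\<phi> (F t), t)) ` {t0..t1}"
    then obtain t where t: "t \<in> {t0..t1}" "z = (\<phi> (F t), t)" by auto
    have Ft: "F t \<in> f ` {c..d}" using assms(9) t(1) by blast
    have "\<phi> (F t) \<in> {c..d}" unfolding \<phi>_def using inv_into_into[OF Ft] .
    moreover have "f (\<phi> (F t)) = F t" unfolding \<phi>_def using f_inv_into_f[OF Ft] .
    moreover have "t \<in> {0..1}" using t(1) assms(6,8) by auto
    ultimately show "z \<in> SS f F" using t(2) assms(3,4) unfolding SS_def by auto
  qed
  have e0: "\<phi> (F t0) = s0" unfolding \<phi>_def using assms(2,10,12) by (metis inv_into_f_f)
  have e1: "\<phi> (F t1) = s1" unfolding \<phi>_def using assms(2,11,13) by (metis inv_into_f_f)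
  have "(s0,t0) \<in> (\<lambda>t. (\<phi> (F t), t)) ` {t0..t1}" using e0 assms(7) by (intro image_eqI[where x=t0]) auto
  moreover have "(s1,t1) \<in> (\<lambda>t. (\<phi> (F t), t)) ` {t0..t1}" using e1 assms(7) by (intro image_eqI[where x=t1]) auto
  ultimately have "path_component ((\<lambda>t. (\<phi> (F t), t)) ` {t0..t1}) (s0,t0) (s1,t1)"
    using pc path_connected_component by blast
  then show ?thesis using path_component_of_subset[OF sub] by blast
qed

lemma first_hit:
  fixes F :: "real \<Rightarrow> real"
  assumes uv: "u \<le> v" and Fc: "continuous_on {u..v} F" and "F u \<le> c" "c \<le> F v"
  shows "\<exists>x. u \<le> x \<and> x \<le> v \<and> F x = c \<and> (\<forall>t. u \<le> t \<and> t \<le> x \<longrightarrow> F t \<le> c)"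
proof -
  define K where "K = {t \<in> {u..v}. F t = c}"
  have Kc: "closed K" unfolding K_def by (rule continuous_closed_preimage_constant[OF Fc closed_atLeastAtMost])
  obtain t0 where "u \<le> t0" "t0 \<le> v" "F t0 = c" using IVT'[of F u c v] assms by blast
  then have Kne: "K \<noteq> {}" unfolding K_def by auto
  have Kb: "bdd_below K" unfolding K_def by (rule bdd_belowI[where m=u]) auto
  define x where "x = Inf K"
  have xK: "x \<in> K" unfolding x_def by (rule closed_contains_Inf[OF Kne Kb Kc])
  have low: "\<And>t. t \<in> K \<Longrightarrow> x \<le> t" unfolding x_def by (rule cInf_lower[OF _ Kb])
  have "\<forall>t. u \<le> t \<and> t \<le> x \<longrightarrow> F t \<le> c"
  proof (intro allI impI)
    fix t assume t: "u \<le> t \<and> t \<le> x"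
    show "F t \<le> c"
    proof (rule ccontr)
      assume "\<not> F t \<le> c"
      then have "c \<le> F t" by simp
      moreover have "continuous_on {u..t} F" using Fc by (rule continuous_on_subset) (use t xK K_def in auto)
      ultimately obtain t' where t': "u \<le> t'" "t' \<le> t" "F t' = c" using IVT'[of F u c t] assms t by blast
      have "x \<le> v" using xK unfolding K_def by auto
      then have "t' \<in> K" unfolding K_def using t t' by auto
      then have "x \<le> t'" by (rule low)
      then have "t = x" "t' = t" using t t' by auto
      then show False using \<open>\<not> F t \<le> c\<close> t' by simp
    qed
  qed
  then show ?thesis using xK unfolding K_def by auto
qed

lemma last_hit:
  fixes F :: "real \<Rightarrow> real"
  assumes uv: "u \<le> v" and Fc: "continuous_on {u..v} F" and "F u \<le> c" "c \<le> F v"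
  shows "\<exists>x. u \<le> x \<and> x \<le> v \<and> F x = c \<and> (\<forall>t. x \<le> t \<and> t \<le> v \<longrightarrow> c \<le> F t)"
proof -
  define K where "K = {t \<in> {u..v}. F t = c}"
  have Kc: "closed K" unfolding K_def by (rule continuous_closed_preimage_constant[OF Fc closed_atLeastAtMost])
  obtain t0 where "u \<le> t0" "t0 \<le> v" "F t0 = c" using IVT'[of F u c v] assms by blast
  then have Kne: "K \<noteq> {}" unfolding K_def by auto
  have Kb: "bdd_above K" unfolding K_def by (rule bdd_aboveI[where M=v]) auto
  define x where "x = Sup K"
  have xK: "x \<in> K" unfolding x_def by (rule closed_contains_Sup[OF Kne Kb Kc])
  have up: "\<And>t. t \<in> K \<Longrightarrow> t \<le> x" unfolding x_def by (rule cSup_upper[OF _ Kb])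
  have "\<forall>t. x \<le> t \<and> t \<le> v \<longrightarrow> c \<le> F t"
  proof (intro allI impI)
    fix t assume t: "x \<le> t \<and> t \<le> v"
    show "c \<le> F t"
    proof (rule ccontr)
      assume "\<not> c \<le> F t"
      then have "F t \<le> c" by simp
      moreover have "continuous_on {t..v} F" using Fc by (rule continuous_on_subset) (use t xK K_def in auto)
      ultimately obtain t' where t': "t \<le> t'" "t' \<le> v" "F t' = c" using IVT'[of F t c v] assms t by blast
      have "u \<le> x" using xK unfolding K_def by auto
      then have "t' \<in> K" unfolding K_def using t t' by auto
      then have "t' \<le> x" by (rule up)
      then have "t = x" "t' = t" using t t' by auto
      then show False using \<open>\<not> c \<le> F t\<close> t' by simp
    qed
  qed
  then show ?thesis using xK unfolding K_def by auto
qed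

lemma first_hit_dn:
  fixes F :: "real \<Rightarrow> real"
  assumes uv: "u \<le> v" and Fc: "continuous_on {u..v} F" and "c \<le> F u" "F v \<le> c"
  shows "\<exists>x. u \<le> x \<and> x \<le> v \<and> F x = c \<and> (\<forall>t. u \<le> t \<and> t \<le> x \<longrightarrow> c \<le> F t)"
proof -
  have "continuous_on {u..v} (\<lambda>t. - F t)" using Fc by (intro continuous_intros)
  from first_hit[OF uv this, of "-c"] assms obtain x where
    "u \<le> x \<and> x \<le> v \<and> - F x = - c \<and> (\<forall>t. u \<le> t \<and> t \<le> x \<longrightarrow> - F t \<le> - c)" by auto
  then show ?thesis by (intro exI[where x=x]) auto
qed

lemma last_hit_dn:
  fixes F :: "real \<Rightarrow> real"
  assumes uv: "u \<le> v" and Fc: "continuous_on {u..v} F" and "c \<le> F u" "F v \<le> c"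
  shows "\<exists>x. u \<le> x \<and> x \<le> v \<and> F x = c \<and> (\<forall>t. x \<le> t \<and> t \<le> v \<longrightarrow> F t \<le> c)"
proof -
  have "continuous_on {u..v} (\<lambda>t. - F t)" using Fc by (intro continuous_intros)
  from last_hit[OF uv this, of "-c"] assms obtain x where
    "u \<le> x \<and> x \<le> v \<and> - F x = - c \<and> (\<forall>t. x \<le> t \<and> t \<le> v \<longrightarrow> - c \<le> - F t)" by auto
  then show ?thesis by (intro exI[where x=x]) auto
qed

definition PM :: "(real \<Rightarrow> real) \<Rightarrow> nat \<Rightarrow> (nat \<Rightarrow> real) \<Rightarrow> bool" where
  "PM f n x \<longleftrightarrow> x 0 = 0 \<and> x n = 1 \<and> (\<forall>i<n. x i < x (Suc i)) \<and>
     (\<forall>i<n. strict_mono_on {x i..x (Suc i)} f \<or> strict_antimono_on {x i..x (Suc i)} f)"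

lemma smono_le:
  fixes f :: "real \<Rightarrow> real"
  assumes "strict_mono_on S f" "a \<in> S" "b \<in> S" "a \<le> b" shows "f a \<le> f b"
  using assms unfolding monotone_on_def by (cases "a = b") (auto simp: less_imp_le)

lemma santi_le:
  fixes f :: "real \<Rightarrow> real"
  assumes "strict_antimono_on S f" "a \<in> S" "b \<in> S" "a \<le> b" shows "f b \<le> f a"
  using assms unfolding monotone_on_def by (cases "a = b") (auto simp: less_imp_le)

lemma smono_glue:
  fixes f :: "real \<Rightarrow> real"
  assumes "strict_mono_on {a..b} f" "strict_mono_on {b..c} f"
  shows "strict_mono_on {a..c} f"
  unfolding monotone_on_def
proof (intro ballI impI)
  fix s t assume st: "s \<in> {a..c}" "t \<in> {a..c}" "s < t"
  show "f s < f t"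
  proof (cases "t \<le> b")
    case True then show ?thesis using assms(1) st unfolding monotone_on_def by auto
  next
    case False
    show ?thesis
    proof (cases "b \<le> s")
      case True then show ?thesis using assms(2) st unfolding monotone_on_def by auto
    next
      case False
      then have "f s < f b" using assms(1) st \<open>\<not> t \<le> b\<close> unfolding monotone_on_def by auto
      also have "f b < f t" using assms(2) st \<open>\<not> t \<le> b\<close> False unfolding monotone_on_def by auto
      finally show ?thesis .
    qed
  qed
qed

lemma santi_glue:
  fixes f :: "real \<Rightarrow> real"
  assumes "strict_antimono_on {a..b} f" "strict_antimono_on {b..c} f"
  shows "strict_antimono_on {a..c} f"
  unfolding monotone_on_def
proof (intro ballI impI)
  fix s t assume st: "s \<in> {a..c}" "t \<in> {a..c}" "s < t"
  show "f t < f s"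
  proof (cases "t \<le> b")
    case True then show ?thesis using assms(1) st unfolding monotone_on_def by auto
  next
    case False
    show ?thesis
    proof (cases "b \<le> s")
      case True then show ?thesis using assms(2) st unfolding monotone_on_def by auto
    next
      case False
      then have "f b < f s" using assms(1) st \<open>\<not> t \<le> b\<close> unfolding monotone_on_def by auto
      moreover have "f t < f b" using assms(2) st \<open>\<not> t \<le> b\<close> False unfolding monotone_on_def by auto
      ultimately show ?thesis by simp
    qed
  qed
qed

lemma smono_cong:
  assumes "strict_mono_on S (f::real\<Rightarrow>real)" "\<And>y. y \<in> S \<Longrightarrow> g y = f y"
  shows "strict_mono_on S g"
  using assms unfolding monotone_on_def by auto

lemma santi_cong:
  assumes "strict_antimono_on S (f::real\<Rightarrow>real)" "\<And>y. y \<in> S \<Longrightarrow> g y = f y"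
  shows "strict_antimono_on S g"
  using assms unfolding monotone_on_def by auto

lemma PM_lt:
  assumes "\<forall>i<n. x i < (x (Suc i) :: real)" "i < k" "k \<le> n"
  shows "x i < x k"
  using assms(2,3)
proof (induction k)
  case 0 then show ?case by simp
next
  case (Suc k)
  then show ?case using assms(1)
    by (cases "i = k") (auto intro: less_trans)
qed

lemma PM_le:
  assumes "\<forall>i<n. x i < (x (Suc i) :: real)" "i \<le> k" "k \<le> n"
  shows "x i \<le> x k"
  using PM_lt[OF assms(1)] assms(2,3) by (cases "i = k") (auto simp: less_imp_le)

lemma PM_range:
  assumes "PM f n x" "i \<le> n" shows "0 \<le> x i" "x i \<le> 1"
  using PM_le[of n x 0 i] PM_le[of n x i n] assms unfolding PM_def by auto

lemma base_UNI:
  fixes f :: "real \<Rightarrow> real"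
  assumes fc: "continuous_on {0..1} f" and f0: "f 0 = 0" and f1: "f 1 = 1"
    and m: "strict_mono_on {0..1} f"
  shows "UNI f"
  unfolding UNI_def
proof (intro allI impI)
  fix F :: "real \<Rightarrow> real"
  assume Fc: "continuous_on {0..1} F" and Fr: "F ` {0..1} \<subseteq> {0..1}" and F0: "F 0 = 0" and F1: "F 1 = 1"
  have "path_component (SS f F) (0,0) (1,1)"
  proof (rule track[OF fc strict_mono_on_imp_inj_on[OF m] order.refl order.refl Fc])
    show "\<forall>t\<in>{0..1}. F t \<in> f ` {0..1}"
    proof
      fix t :: real assume t: "t \<in> {0..1}"
      have "F t \<in> {0..1}" using Fr t by blast
      then have "f 0 \<le> F t" "F t \<le> f 1" using f0 f1 by auto
      then obtain s where "0 \<le> s" "s \<le> 1" "f s = F t" using IVT'[OF _ _ _ fc] by force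
      then show "F t \<in> f ` {0..1}" by force
    qed
  qed (use f0 f1 F0 F1 in auto)
  then show "\<exists>g1 g2 :: real \<Rightarrow> real.
           continuous_on {0..1} g1 \<and> g1 ` {0..1} \<subseteq> {0..1} \<and>
           continuous_on {0..1} g2 \<and> g2 ` {0..1} \<subseteq> {0..1} \<and>
           g1 0 = 0 \<and> g2 0 = 0 \<and> g1 1 = 1 \<and> g2 1 = 1 \<and>
           (\<forall>t\<in>{0..1}. f (g1 t) = F (g2 t))"
    by (rule bridge)
qed

lemma merge_PM:
  fixes f :: "real \<Rightarrow> real"
  assumes P: "PM f n x" and i: "Suc i < n"
    and same: "(strict_mono_on {x i..x (Suc i)} f \<and> strict_mono_on {x (Suc i)..x (Suc (Suc i))} f) \<or>
               (strict_antimono_on {x i..x (Suc i)} f \<and> strict_antimono_on {x (Suc i)..x (Suc (Suc i))} f)"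
  shows "PM f (n - 1) (\<lambda>k. if k \<le> i then x k else x (Suc k))"
proof -
  define y where "y = (\<lambda>k. if k \<le> i then x k else x (Suc k))"
  have inc: "\<forall>i<n. x i < x (Suc i)" using P unfolding PM_def by blast
  have pc: "\<forall>i<n. strict_mono_on {x i..x (Suc i)} f \<or> strict_antimono_on {x i..x (Suc i)} f"
    using P unfolding PM_def by blast
  have "y 0 = 0" using P unfolding PM_def y_def by simp
  moreover have "y (n - 1) = 1" using P i unfolding PM_def y_def by (auto simp: Suc_diff_1)
  moreover have "\<forall>k<n-1. y k < y (Suc k)"
  proof (intro allI impI)
    fix k assume k: "k < n - 1"
    show "y k < y (Suc k)"
    proof (cases "Suc k \<le> i")
      case True then show ?thesis unfolding y_def using inc i by auto
    next
      case False
      show ?thesis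
      proof (cases "k = i")
        case True
        then have "x k < x (Suc (Suc k))" using inc i by (meson Suc_lessD less_trans lessI)
        then show ?thesis using True unfolding y_def by auto
      next
        case False
        then show ?thesis using \<open>\<not> Suc k \<le> i\<close> inc k unfolding y_def by auto
      qed
    qed
  qed
  moreover have "\<forall>k<n-1. strict_mono_on {y k..y (Suc k)} f \<or> strict_antimono_on {y k..y (Suc k)} f"
  proof (intro allI impI)
    fix k assume k: "k < n - 1"
    show "strict_mono_on {y k..y (Suc k)} f \<or> strict_antimono_on {y k..y (Suc k)} f"
    proof (cases "Suc k \<le> i")
      case True then show ?thesis unfolding y_def using pc i by auto
    next
      case False
      show ?thesis
      proof (cases "k = i")
        case True
        then show ?thesis unfolding y_def using same smono_glue santi_glue by auto
      next
        case False
        then have "Suc k < n" using k by auto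
        then show ?thesis using \<open>\<not> Suc k \<le> i\<close> False pc unfolding y_def by auto
      qed
    qed
  qed
  ultimately show ?thesis unfolding PM_def y_def by blast
qed

lemma aff_less:
  fixes A B a b c u :: real
  assumes "0 < A" "0 < B" "a < b"
  shows "u + A * (a - c) / B < u + A * (b - c) / B"
proof -
  have "A * (a - c) < A * (b - c)" using assms by simp
  then have "A * (a - c) / B < A * (b - c) / B" using assms(2) by (simp add: divide_strict_right_mono)
  then show ?thesis by simp
qed

definition ZIG :: "(real \<Rightarrow> real) \<Rightarrow> bool" where
  "ZIG Z \<longleftrightarrow> continuous_on {0..1} Z \<and> Z ` {0..1} \<subseteq> {0..1} \<and> Z 0 = 0 \<and> Z 1 = 1 \<and>
     (\<exists>p q. 0 \<le> p \<and> p \<le> q \<and> q \<le> 1 \<and> strict_mono_on {0..p} Z \<and> strict_antimono_on {p..q} Z \<and>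
       strict_mono_on {q..1} Z \<and> Z q < Z p)"

lemma fold_core:
  fixes f :: "real \<Rightarrow> real"
  assumes fc: "continuous_on {0..1} f" and P: "PM f n x"
    and kn: "Suc (Suc (Suc k)) \<le> n"
    and m1: "strict_mono_on {x k..x (Suc k)} f"
    and m2: "strict_antimono_on {x (Suc k)..x (Suc (Suc k))} f"
    and m3: "strict_mono_on {x (Suc (Suc k))..x (Suc (Suc (Suc k)))} f"
    and u: "x k \<le> u" "u \<le> x (Suc k)" "f u = f (x (Suc (Suc k)))"
    and w: "x (Suc (Suc k)) \<le> w" "w \<le> x (Suc (Suc (Suc k)))" "f w = f (x (Suc k))"
  shows "\<exists>f' Z. continuous_on {0..1} f' \<and> f' ` {0..1} \<subseteq> f ` {0..1} \<and> f' 0 = f 0 \<and> f' 1 = f 1 \<and>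
     (\<exists>y. PM f' (n - 2) y) \<and> ZIG Z \<and> (\<forall>s\<in>{0..1}. f s = f' (Z s))"
proof -
  define X0 X1 X2 X3 where "X0 = x k" "X1 = x (Suc k)" "X2 = x (Suc (Suc k))" "X3 = x (Suc (Suc (Suc k)))"
  have inc: "\<forall>i<n. x i < x (Suc i)" using P unfolding PM_def by blast
  have pc: "\<forall>i<n. strict_mono_on {x i..x (Suc i)} f \<or> strict_antimono_on {x i..x (Suc i)} f"
    using P unfolding PM_def by blast
  have X01: "X0 < X1" "X1 < X2" "X2 < X3" unfolding X0_X1_X2_X3_def using inc kn by auto
  have X0r: "0 \<le> X0" using PM_range[OF P, of k] kn unfolding X0_X1_X2_X3_def by auto
  have X3r: "X3 \<le> 1" using PM_range[OF P, of "Suc (Suc (Suc k))"] kn unfolding X0_X1_X2_X3_def by auto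
  note u' = u[folded X0_X1_X2_X3_def] and w' = w[folded X0_X1_X2_X3_def]
  note m1' = m1[folded X0_X1_X2_X3_def] and m2' = m2[folded X0_X1_X2_X3_def] and m3' = m3[folded X0_X1_X2_X3_def]
  define c0 where "c0 = f u"
  define c1 where "c1 = f w"
  have c01: "c0 < c1" unfolding c0_def c1_def u'(3) w'(3) using m2' X01 unfolding monotone_on_def by auto
  have uw: "u < w" using u' w' X01 by auto
  have u0: "0 \<le> u" and w1: "w \<le> 1" using u' w' X0r X3r X01 by auto
  have fb: "c0 \<le> f s \<and> f s \<le> c1" if s: "u \<le> s" "s \<le> w" for s
  proof (cases "s \<le> X1")
    case True
    have "f u \<le> f s" by (rule smono_le[OF m1']) (use u' s True in auto)
    moreover have "f s \<le> f X1" by (rule smono_le[OF m1']) (use u' s True X01 in auto)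
    ultimately show ?thesis unfolding c0_def c1_def w'(3) by simp
  next
    case False
    show ?thesis
    proof (cases "s \<le> X2")
      case True
      have "f X2 \<le> f s" by (rule santi_le[OF m2']) (use False True in auto)
      moreover have "f s \<le> f X1" by (rule santi_le[OF m2']) (use False True in auto)
      ultimately show ?thesis unfolding c0_def c1_def w'(3) u'(3) by simp
    next
      case False
      have "f X2 \<le> f s" by (rule smono_le[OF m3']) (use False s w' in auto)
      moreover have "f s \<le> f w" by (rule smono_le[OF m3']) (use False s w' in auto)
      ultimately show ?thesis unfolding c0_def c1_def u'(3) by simp
    qed
  qed
  define lin where "lin = (\<lambda>y. c0 + (c1 - c0) * (y - u) / (w - u))"
  define f' where "f' = (\<lambda>y. if u \<le> y \<and> y \<le> w then lin y else f y)"
  define Z where "Z = (\<lambda>s. if u \<le> s \<and> s \<le> w then u + (w - u) * (f s - c0) / (c1 - c0) else s)"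
  have f'out: "f' y = f y" if "y \<le> u \<or> w \<le> y" for y
    using that uw unfolding f'_def lin_def c0_def c1_def by auto
  have f'in: "f' y = lin y" if "u \<le> y" "y \<le> w" for y
    using that unfolding f'_def by auto
  have Zout: "Z y = y" if "y \<le> u \<or> w \<le> y" for y
    using that uw c01 unfolding Z_def c0_def c1_def by auto
  have Zin: "Z y = u + (w - u) * (f y - c0) / (c1 - c0)" if "u \<le> y" "y \<le> w" for y
    using that unfolding Z_def by auto
  have Zb: "u \<le> Z s \<and> Z s \<le> w" if "u \<le> s" "s \<le> w" for s
  proof -
    have r: "0 \<le> (f s - c0) / (c1 - c0)" "(f s - c0) / (c1 - c0) \<le> 1" using fb[OF that] c01 by auto
    have A: "0 \<le> (w - u) * ((f s - c0) / (c1 - c0))" using r uw by (intro mult_nonneg_nonneg) auto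
    have B: "(w - u) * ((f s - c0) / (c1 - c0)) \<le> (w - u)" using r uw by (intro mult_left_le) auto
    have eqZ: "Z s = u + (w - u) * ((f s - c0) / (c1 - c0))" using Zin[OF that] by simp
    show ?thesis using A B eqZ by linarith
  qed
  have comp: "f s = f' (Z s)" if "s \<in> {0..1}" for s
  proof (cases "u \<le> s \<and> s \<le> w")
    case True
    then have "f' (Z s) = lin (Z s)" using Zb f'in by auto
    also have "\<dots> = f s"
    proof -
      have n1: "c1 - c0 \<noteq> 0" "w - u \<noteq> 0" using uw c01 by auto
      have "(c1 - c0) * ((w - u) * (f s - c0) / (c1 - c0)) = (w - u) * (f s - c0)"
        using n1 by simp
      then have "(c1 - c0) * ((w - u) * (f s - c0) / (c1 - c0)) / (w - u) = f s - c0"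
        using n1 by simp
      then show ?thesis unfolding lin_def Zin[OF conjunct1[OF True] conjunct2[OF True]] by simp
    qed
    finally show ?thesis by simp
  next
    case False
    then have "s < u \<or> w < s" by auto
    then show ?thesis using Zout f'out by auto
  qed
  have cfA: "continuous_on {0..u} f" "continuous_on {w..1} f" "continuous_on {u..w} f"
    using fc uw u0 w1 by (auto elim!: continuous_on_subset)
  have split01: "{0..1} = {0..u} \<union> {u..w} \<union> {w..(1::real)}" using u0 w1 uw by auto
  have cf': "continuous_on {0..1} f'"
  proof -
    have "continuous_on {0..u} f'" by (rule continuous_on_eq[OF cfA(1)]) (use f'out in auto)
    moreover have "continuous_on {u..w} f'"
      by (rule continuous_on_eq[of _ lin]) (use uw in \<open>auto simp: lin_def f'in intro!: continuous_intros\<close>)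
    moreover have "continuous_on {w..1} f'" by (rule continuous_on_eq[OF cfA(2)]) (use f'out in auto)
    ultimately show ?thesis unfolding split01
      by (intro continuous_on_closed_Un) auto
  qed
  have cZ: "continuous_on {0..1} Z"
  proof -
    have "continuous_on {0..u} Z" by (rule continuous_on_eq[OF continuous_on_id]) (use Zout in auto)
    moreover have "continuous_on {u..w} Z"
      by (rule continuous_on_eq[of _ "\<lambda>y. u + (w - u) * (f y - c0) / (c1 - c0)"])
         (use cfA(3) Zin c01 in \<open>auto intro!: continuous_intros\<close>)
    moreover have "continuous_on {w..1} Z" by (rule continuous_on_eq[OF continuous_on_id]) (use Zout in auto)
    ultimately show ?thesis unfolding split01
      by (intro continuous_on_closed_Un) auto
  qed
  have rf': "f' ` {0..1} \<subseteq> f ` {0..1}"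
  proof
    fix z assume "z \<in> f' ` {0..1}"
    then obtain y where y: "y \<in> {0..1}" "z = f' y" by auto
    show "z \<in> f ` {0..1}"
    proof (cases "u \<le> y \<and> y \<le> w")
      case True
      have "0 \<le> (y - u) / (w - u)" "(y - u) / (w - u) \<le> 1" using True uw by auto
      note r = this
      have A: "0 \<le> (c1 - c0) * ((y - u) / (w - u))"
        by (rule mult_nonneg_nonneg) (use r c01 in auto)
      have A2: "(c1 - c0) * ((y - u) / (w - u)) \<le> c1 - c0"
        by (rule mult_left_le) (use r c01 in auto)
      have "lin y = c0 + (c1 - c0) * ((y - u) / (w - u))" unfolding lin_def by simp
      then have "c0 \<le> lin y" "lin y \<le> c1" using A A2 by linarith+
      then obtain s where s: "u \<le> s" "s \<le> w" "f s = lin y"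
        using IVT'[of f u "lin y" w] cfA(3) uw unfolding c0_def c1_def by auto
      then have "s \<in> {0..1}" using u0 w1 by auto
      then show ?thesis using s y True f'in by force
    next
      case False
      then show ?thesis using y f'out by force
    qed
  qed
  have rZ: "Z ` {0..1} \<subseteq> {0..1}"
  proof
    fix z assume "z \<in> Z ` {0..1}"
    then obtain y where y: "y \<in> {0..1}" "z = Z y" by auto
    show "z \<in> {0..1}"
    proof (cases "u \<le> y \<and> y \<le> w")
      case True then show ?thesis using Zb[of y] y u0 w1 by auto
    next
      case False then show ?thesis using y Zout by auto
    qed
  qed
  have Z01: "Z 0 = 0" "Z 1 = 1" using Zout u0 w1 by auto
  have f'01: "f' 0 = f 0" "f' 1 = f 1" using f'out u0 w1 by auto
  have idm: "strict_mono_on S (\<lambda>y::real. y)" for S by (auto simp: monotone_on_def)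
  have ZA: "strict_mono_on {0..X1} Z"
  proof (rule smono_glue[of 0 u])
    show "strict_mono_on {0..u} Z" by (rule smono_cong[OF idm]) (use Zout in auto)
    show "strict_mono_on {u..X1} Z" unfolding monotone_on_def
    proof (intro ballI impI)
      fix s t assume st: "s \<in> {u..X1}" "t \<in> {u..X1}" "s < t"
      have "f s < f t" using m1' st u' unfolding monotone_on_def by auto
      then show "Z s < Z t" using Zin[of s] Zin[of t] st X01 w' uw c01 aff_less by auto
    qed
  qed
  have ZB: "strict_antimono_on {X1..X2} Z" unfolding monotone_on_def
  proof (intro ballI impI)
    fix s t assume st: "s \<in> {X1..X2}" "t \<in> {X1..X2}" "s < t"
    have "f t < f s" using m2' st unfolding monotone_on_def by auto
    then show "Z t < Z s" using Zin[of s] Zin[of t] st u' w' uw c01 aff_less by auto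
  qed
  have ZC: "strict_mono_on {X2..1} Z"
  proof (rule smono_glue[of X2 w])
    show "strict_mono_on {w..1} Z" by (rule smono_cong[OF idm]) (use Zout in auto)
    show "strict_mono_on {X2..w} Z" unfolding monotone_on_def
    proof (intro ballI impI)
      fix s t assume st: "s \<in> {X2..w}" "t \<in> {X2..w}" "s < t"
      have "f s < f t" using m3' st w' unfolding monotone_on_def by auto
      then show "Z s < Z t" using Zin[of s] Zin[of t] st X01 u' uw c01 aff_less by auto
    qed
  qed
  have Zpq: "Z X2 < Z X1"
  proof -
    have "Z X2 = u" using Zin[of X2] u' w' X01 unfolding c0_def by auto
    moreover have "Z X1 = w" using Zin[of X1] u' w' X01 c01 unfolding c1_def by auto
    ultimately show ?thesis using uw by simp
  qed
  have zig: "ZIG Z" unfolding ZIG_def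
    using cZ rZ Z01 ZA ZB ZC Zpq X01 X0r X3r u' w' by (intro conjI exI[of _ X1] exI[of _ X2]) auto
  define y where "y = (\<lambda>i. if i \<le> k then x i else x (Suc (Suc i)))"
  have lin_m: "strict_mono_on {u..w} lin" unfolding monotone_on_def lin_def
  proof (intro ballI impI)
    fix s t :: real assume "s < t"
    then have "(c1 - c0) * (s - u) < (c1 - c0) * (t - u)" using c01 by simp
    then show "c0 + (c1 - c0) * (s - u) / (w - u) < c0 + (c1 - c0) * (t - u) / (w - u)"
      using uw by (simp add: divide_strict_right_mono)
  qed
  have "PM f' (n - 2) y"
    unfolding PM_def
  proof (intro conjI allI impI)
    show "y 0 = 0" using P unfolding y_def PM_def by simp
    have "Suc (Suc (n - 2)) = n" "\<not> n - 2 \<le> k" using kn by auto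
    then show "y (n - 2) = 1" using P unfolding y_def PM_def by simp
  next
    fix i assume i: "i < n - 2"
    show "y i < y (Suc i)"
    proof (cases "Suc i \<le> k")
      case True then show ?thesis unfolding y_def using inc kn by auto
    next
      case False
      show ?thesis
      proof (cases "i = k")
        case True then show ?thesis unfolding y_def using X01 unfolding X0_X1_X2_X3_def by auto
      next
        case False then show ?thesis using \<open>\<not> Suc i \<le> k\<close> inc i unfolding y_def by auto
      qed
    qed
  next
    fix i assume i: "i < n - 2"
    show "strict_mono_on {y i..y (Suc i)} f' \<or> strict_antimono_on {y i..y (Suc i)} f'"
    proof (cases "Suc i \<le> k")
      case True
      have le: "x (Suc i) \<le> u" using PM_le[OF inc True] kn u(1) by auto
      have eq: "\<And>z. z \<in> {x i..x (Suc i)} \<Longrightarrow> f' z = f z" using le f'out by auto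
      have "i < n" using True kn by auto
      then have "strict_mono_on {x i..x (Suc i)} f \<or> strict_antimono_on {x i..x (Suc i)} f" using pc by blast
      then have "strict_mono_on {x i..x (Suc i)} f' \<or> strict_antimono_on {x i..x (Suc i)} f'"
        using smono_cong[of "{x i..x (Suc i)}" f f', OF _ eq] santi_cong[of "{x i..x (Suc i)}" f f', OF _ eq] by blast
      then show ?thesis unfolding y_def using True by auto
    next
      case False
      show ?thesis
      proof (cases "i = k")
        case True
        have A1: "strict_mono_on {X0..u} f'"
          by (rule smono_cong[OF monotone_on_subset[OF m1']]) (use u' f'out in auto)
        have A2: "strict_mono_on {u..w} f'" by (rule smono_cong[OF lin_m]) (use f'in in auto)
        have A3: "strict_mono_on {w..X3} f'"
          by (rule smono_cong[OF monotone_on_subset[OF m3']]) (use w' f'out in auto)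
        have "strict_mono_on {X0..X3} f'" by (rule smono_glue[OF smono_glue[OF A1 A2] A3])
        then show ?thesis unfolding y_def True X0_X1_X2_X3_def by auto
      next
        case False
        then have ik: "k < i" using \<open>\<not> Suc i \<le> k\<close> by auto
        have "Suc (Suc i) \<le> n" using i by auto
        then have "x (Suc (Suc (Suc k))) \<le> x (Suc (Suc i))" using PM_le[OF inc, of "Suc (Suc (Suc k))" "Suc (Suc i)"] ik by auto
        then have le: "w \<le> x (Suc (Suc i))" using w(2) by linarith
        have eq: "\<And>z. z \<in> {x (Suc (Suc i))..x (Suc (Suc (Suc i)))} \<Longrightarrow> f' z = f z" using le f'out by auto
        have "Suc (Suc i) < n" using i by auto
        then have "strict_mono_on {x (Suc (Suc i))..x (Suc (Suc (Suc i)))} f \<or> strict_antimono_on {x (Suc (Suc i))..x (Suc (Suc (Suc i)))} f" using pc by blast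
        then have "strict_mono_on {x (Suc (Suc i))..x (Suc (Suc (Suc i)))} f' \<or> strict_antimono_on {x (Suc (Suc i))..x (Suc (Suc (Suc i)))} f'"
          using smono_cong[of "{x (Suc (Suc i))..x (Suc (Suc (Suc i)))}" f f', OF _ eq]
            santi_cong[of "{x (Suc (Suc i))..x (Suc (Suc (Suc i)))}" f f', OF _ eq] by blast
        then show ?thesis unfolding y_def using ik by auto
      qed
    qed
  qed
  then show ?thesis using cf' rf' f'01 zig comp by blast
qed

lemma strict_antimono_on_inj: 
  fixes f :: "real \<Rightarrow> real"
  assumes "strict_antimono_on S f" shows "inj_on f S"
proof (rule inj_onI)
  fix x y assume xy: "x \<in> S" "y \<in> S" "f x = f y"
  show "x = y"
  proof (rule ccontr)
    assume "x \<noteq> y"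
    then have "x < y \<or> y < x" by auto
    then show False using assms xy unfolding monotone_on_def by force
  qed
qed

lemma zigzag:
  fixes f :: "real \<Rightarrow> real"
  assumes fc: "continuous_on {0..1} f" and fr: "f ` {0..1} \<subseteq> {0..1}" and f0: "f 0 = 0" and f1: "f 1 = 1"
    and pq: "0 \<le> p" "p \<le> q" "q \<le> 1"
    and mA: "strict_mono_on {0..p} f" and mB: "strict_antimono_on {p..q} f" and mC: "strict_mono_on {q..1} f"
    and ba: "f q < f p"
  shows "UNI f"
  unfolding UNI_def
proof (intro allI impI)
  fix F :: "real \<Rightarrow> real"
  assume Fc: "continuous_on {0..1} F" and Fr: "F ` {0..1} \<subseteq> {0..1}" and F0: "F 0 = 0" and F1: "F 1 = 1"
  define a where "a = f p"
  define b where "b = f q"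
  have "q \<in> {0..1}" "p \<in> {0..1}" using pq by auto
  then have "f q \<in> {0..1}" "f p \<in> {0..1}" using fr by blast+
  then have b0: "0 \<le> b" and a1: "a \<le> 1" unfolding a_def b_def by auto
  have ab: "b < a" unfolding a_def b_def by (rule ba)
  have Fr': "0 \<le> F t \<and> F t \<le> 1" if "t \<in> {0..1}" for t
  proof -
    have "F t \<in> {0..1}" using Fr that by blast
    then show ?thesis by simp
  qed
  have cA: "continuous_on {0..p} f" using fc by (rule continuous_on_subset) (use pq in auto)
  have cB: "continuous_on {p..q} f" using fc by (rule continuous_on_subset) (use pq in auto)
  have cC: "continuous_on {q..1} f" using fc by (rule continuous_on_subset) (use pq in auto)
  have mvA: "path_component (SS f F) (s0,t0) (s1,t1)"
    if "0 \<le> t0" "t0 \<le> t1" "t1 \<le> 1" "\<forall>t\<in>{t0..t1}. F t \<le> a" "s0 \<in> {0..p}" "s1 \<in> {0..p}"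
       "f s0 = F t0" "f s1 = F t1" for t0 t1 s0 s1
  proof (rule track[OF cA strict_mono_on_imp_inj_on[OF mA] order.refl _ Fc that(1-3) _ that(5-8)])
    show "p \<le> 1" using pq by simp
    show "\<forall>t\<in>{t0..t1}. F t \<in> f ` {0..p}"
    proof
      fix t assume t: "t \<in> {t0..t1}"
      have "f 0 \<le> F t" "F t \<le> f p" using Fr'[of t] that(1-4) t f0 a_def by auto
      then obtain s where "0 \<le> s" "s \<le> p" "f s = F t" using IVT'[OF _ _ pq(1) cA] by blast
      then show "F t \<in> f ` {0..p}" by force
    qed
  qed
  have mvB: "path_component (SS f F) (s0,t0) (s1,t1)"
    if "0 \<le> t0" "t0 \<le> t1" "t1 \<le> 1" "\<forall>t\<in>{t0..t1}. b \<le> F t \<and> F t \<le> a" "s0 \<in> {p..q}" "s1 \<in> {p..q}"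
       "f s0 = F t0" "f s1 = F t1" for t0 t1 s0 s1
  proof (rule track[OF cB strict_antimono_on_inj[OF mB] pq(1) pq(3) Fc that(1-3) _ that(5-8)])
    show "\<forall>t\<in>{t0..t1}. F t \<in> f ` {p..q}"
    proof
      fix t assume t: "t \<in> {t0..t1}"
      have "f q \<le> F t" "F t \<le> f p" using that(4) t a_def b_def by auto
      then obtain s where "p \<le> s" "s \<le> q" "f s = F t" using IVT2'[OF _ _ pq(2) cB] by blast
      then show "F t \<in> f ` {p..q}" by force
    qed
  qed
  have mvC: "path_component (SS f F) (s0,t0) (s1,t1)"
    if "0 \<le> t0" "t0 \<le> t1" "t1 \<le> 1" "\<forall>t\<in>{t0..t1}. b \<le> F t" "s0 \<in> {q..1}" "s1 \<in> {q..1}"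
       "f s0 = F t0" "f s1 = F t1" for t0 t1 s0 s1
  proof (rule track[OF cC strict_mono_on_imp_inj_on[OF mC] _ order.refl Fc that(1-3) _ that(5-8)])
    show "0 \<le> q" using pq by simp
    show "\<forall>t\<in>{t0..t1}. F t \<in> f ` {q..1}"
    proof
      fix t assume t: "t \<in> {t0..t1}"
      have "f q \<le> F t" "F t \<le> f 1" using Fr'[of t] that(1-4) t f1 b_def by auto
      then obtain s where "q \<le> s" "s \<le> 1" "f s = F t" using IVT'[OF _ _ pq(3) cC] by blast
      then show "F t \<in> f ` {q..1}" by force
    qed
  qed
  have "uniformly_continuous_on {0..1} F" using compact_uniformly_continuous[OF Fc compact_Icc] .
  then obtain \<delta> where d0: "\<delta> > 0" and dF: "\<forall>x\<in>{0..1}. \<forall>x'\<in>{0..1}. dist x' x < \<delta> \<longrightarrow> dist (F x') (F x) < a - b"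
    unfolding uniformly_continuous_on_def using ab by (meson diff_gt_0_iff_gt)
  define P where "P = (\<lambda>z. path_component (SS f F) (0,0) z)"
  define I where "I = (\<lambda>\<tau>. 0 \<le> \<tau> \<and> \<tau> \<le> 1 \<and> F \<tau> \<le> b \<and> (\<exists>s\<in>{0..p}. f s = F \<tau> \<and> P (s,\<tau>)))"
  have key: "\<forall>\<tau>. I \<tau> \<and> 1 - \<tau> < real n * \<delta> \<longrightarrow> P (1,1)" for n :: nat
  proof (induction n)
    case 0
    then show ?case unfolding I_def by auto
  next
    case (Suc n)
    show ?case
    proof (intro allI impI)
      fix \<tau> assume H: "I \<tau> \<and> 1 - \<tau> < real (Suc n) * \<delta>"
      then have \<tau>: "0 \<le> \<tau>" "\<tau> \<le> 1" "F \<tau> \<le> b" unfolding I_def by auto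
      obtain s where s: "s \<in> {0..p}" "f s = F \<tau>" "P (s,\<tau>)" using H unfolding I_def by blast
      have Fc1: "continuous_on {\<tau>..1} F" using Fc by (rule continuous_on_subset) (use \<tau> in auto)
      obtain x where x: "\<tau> \<le> x" "x \<le> 1" "F x = a" and xa: "\<forall>t. \<tau> \<le> t \<and> t \<le> x \<longrightarrow> F t \<le> a"
        using first_hit[OF \<tau>(2) Fc1, of a] \<tau>(3) ab a1 F1 by auto
      have Px: "P (p,x)" unfolding P_def
        using path_component_trans[OF s(3)[unfolded P_def] mvA[OF \<tau>(1) x(1) x(2) _ s(1) _ s(2)]] xa x(3) a_def pq by auto
      have Fcx: "continuous_on {\<tau>..x} F" using Fc by (rule continuous_on_subset) (use \<tau> x in auto)
      obtain \<rho> where \<rho>: "\<tau> \<le> \<rho>" "\<rho> \<le> x" "F \<rho> = b" and \<rho>b: "\<forall>t. \<rho> \<le> t \<and> t \<le> x \<longrightarrow> b \<le> F t"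
        using last_hit[OF x(1) Fcx, of b] \<tau>(3) ab x(3) by auto
      have "path_component (SS f F) (q,\<rho>) (p,x)"
        by (rule mvB) (use \<rho> \<rho>b xa x \<tau> pq a_def b_def in auto)
      then have Pr: "P (q,\<rho>)" unfolding P_def using Px[unfolded P_def] path_component_sym path_component_trans by blast
      have gap: "\<tau> + \<delta> \<le> x"
      proof (rule ccontr)
        assume "\<not> \<tau> + \<delta> \<le> x"
        then have "dist x \<tau> < \<delta>" using x(1) by (simp add: dist_real_def)
        then have "dist (F x) (F \<tau>) < a - b" using dF \<tau> x by auto
        then show False using x(3) \<tau>(3) by (simp add: dist_real_def)
      qed
      show "P (1,1)"
      proof (cases "\<forall>t\<in>{x..1}. b \<le> F t")
        case True
        have "path_component (SS f F) (q,\<rho>) (1,1)"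
        proof (rule mvC)
          show "\<forall>t\<in>{\<rho>..1}. b \<le> F t"
          proof
            fix t assume t: "t \<in> {\<rho>..1}"
            show "b \<le> F t"
            proof (cases "t \<le> x")
              case True then show ?thesis using \<rho>b t by auto
            next
              case False then show ?thesis using \<open>\<forall>t\<in>{x..1}. b \<le> F t\<close> t by auto
            qed
          qed
        qed (use \<rho> x \<tau> pq b_def f1 F1 in auto)
        then show ?thesis using Pr unfolding P_def using path_component_trans by blast
      next
        case False
        then obtain t1 where t1: "x \<le> t1" "t1 \<le> 1" "F t1 < b" by auto
        have Fct: "continuous_on {x..t1} F" using Fc by (rule continuous_on_subset) (use \<tau> x t1 in auto)
        obtain y where y: "x \<le> y" "y \<le> t1" "F y = b" and yb: "\<forall>t. x \<le> t \<and> t \<le> y \<longrightarrow> b \<le> F t"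
          using first_hit_dn[OF t1(1) Fct, of b] t1(3) ab x(3) by auto
        have "path_component (SS f F) (q,\<rho>) (q,y)"
        proof (rule mvC)
          show "\<forall>t\<in>{\<rho>..y}. b \<le> F t"
          proof
            fix t assume t: "t \<in> {\<rho>..y}"
            show "b \<le> F t"
            proof (cases "t \<le> x")
              case True then show ?thesis using \<rho>b t by auto
            next
              case False then show ?thesis using yb t by auto
            qed
          qed
        qed (use \<rho> x \<tau> y t1 pq b_def in auto)
        then have Py: "P (q,y)" using Pr unfolding P_def using path_component_trans by blast
        have Fcy: "continuous_on {x..y} F" using Fc by (rule continuous_on_subset) (use \<tau> x y t1 in auto)
        obtain \<rho>' where \<rho>': "x \<le> \<rho>'" "\<rho>' \<le> y" "F \<rho>' = a" and \<rho>'a: "\<forall>t. \<rho>' \<le> t \<and> t \<le> y \<longrightarrow> F t \<le> a"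
          using last_hit_dn[OF y(1) Fcy, of a] ab x(3) y(3) by auto
        have "path_component (SS f F) (p,\<rho>') (q,y)"
          by (rule mvB) (use \<rho>' \<rho>'a yb y x \<tau> t1 pq a_def b_def in auto)
        then have Pr': "P (p,\<rho>')" unfolding P_def using Py[unfolded P_def] path_component_sym path_component_trans by blast
        obtain s' where s': "0 \<le> s'" "s' \<le> p" "f s' = b"
          using IVT'[OF _ _ pq(1) cA, of b] f0 b0 ab a_def by auto
        have "path_component (SS f F) (p,\<rho>') (s',y)"
          by (rule mvA) (use \<rho>' \<rho>'a y x \<tau> t1 pq a_def s' in auto)
        then have Ps': "P (s',y)" using Pr' unfolding P_def using path_component_trans by blast
        have Iy: "I y" unfolding I_def using Ps' s' y x \<tau> t1 by auto
        have "1 - y < real n * \<delta>" using H gap y(1) by (simp add: algebra_simps)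
        then show ?thesis using Suc.IH Iy by blast
      qed
    qed
  qed
  have I0: "I 0" unfolding I_def P_def using F0 f0 b0 pq
    by (auto intro!: path_component_refl simp: SS_def)
  obtain n :: nat where "1 < real n * \<delta>" using ex_less_of_nat_mult[OF d0] by blast
  then have "P (1,1)" using key[of n, rule_format, of 0] I0 by simp
  then show "\<exists>g1 g2 :: real \<Rightarrow> real.
           continuous_on {0..1} g1 \<and> g1 ` {0..1} \<subseteq> {0..1} \<and>
           continuous_on {0..1} g2 \<and> g2 ` {0..1} \<subseteq> {0..1} \<and>
           g1 0 = 0 \<and> g2 0 = 0 \<and> g1 1 = 1 \<and> g2 1 = 1 \<and>
           (\<forall>t\<in>{0..1}. f (g1 t) = F (g2 t))"
    unfolding P_def by (rule bridge)
qed

lemma neg_mono: "strict_mono_on S (f::real\<Rightarrow>real) \<Longrightarrow> strict_antimono_on S (\<lambda>s. - f s)"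
  unfolding monotone_on_def by auto
lemma neg_anti: "strict_antimono_on S (f::real\<Rightarrow>real) \<Longrightarrow> strict_mono_on S (\<lambda>s. - f s)"
  unfolding monotone_on_def by auto

lemma PM_neg: "PM f n x \<Longrightarrow> PM (\<lambda>s. - f s) n x"
  unfolding PM_def using neg_mono neg_anti by blast

lemma fold_core_anti:
  fixes f :: "real \<Rightarrow> real"
  assumes fc: "continuous_on {0..1} f" and P: "PM f n x"
    and kn: "Suc (Suc (Suc k)) \<le> n"
    and m1: "strict_antimono_on {x k..x (Suc k)} f"
    and m2: "strict_mono_on {x (Suc k)..x (Suc (Suc k))} f"
    and m3: "strict_antimono_on {x (Suc (Suc k))..x (Suc (Suc (Suc k)))} f"
    and u: "x k \<le> u" "u \<le> x (Suc k)" "f u = f (x (Suc (Suc k)))"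
    and w: "x (Suc (Suc k)) \<le> w" "w \<le> x (Suc (Suc (Suc k)))" "f w = f (x (Suc k))"
  shows "\<exists>f' Z. continuous_on {0..1} f' \<and> f' ` {0..1} \<subseteq> f ` {0..1} \<and> f' 0 = f 0 \<and> f' 1 = f 1 \<and>
     (\<exists>y. PM f' (n - 2) y) \<and> ZIG Z \<and> (\<forall>s\<in>{0..1}. f s = f' (Z s))"
proof -
  have gc: "continuous_on {0..1} (\<lambda>s. - f s)" using fc by (intro continuous_intros)
  obtain f'' Z where H: "continuous_on {0..1} f''" "f'' ` {0..1} \<subseteq> (\<lambda>s. - f s) ` {0..1}"
     "f'' 0 = - f 0" "f'' 1 = - f 1" "\<exists>y. PM f'' (n - 2) y" "ZIG Z" "\<forall>s\<in>{0..1}. - f s = f'' (Z s)"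
  proof -
    have u3: "- f u = - f (x (Suc (Suc k)))" and w3: "- f w = - f (x (Suc k))" using u(3) w(3) by auto
    show ?thesis
      using fold_core[OF gc PM_neg[OF P] kn neg_anti[OF m1] neg_mono[OF m2] neg_anti[OF m3] u(1,2) u3 w(1,2) w3]
        that by blast
  qed
  have "continuous_on {0..1} (\<lambda>s. - f'' s)" using H(1) by (intro continuous_intros)
  moreover have "(\<lambda>s. - f'' s) ` {0..1} \<subseteq> f ` {0..1}"
  proof
    fix z assume "z \<in> (\<lambda>s. - f'' s) ` {0..1}"
    then obtain y where y: "y \<in> {0..1}" "z = - f'' y" by auto
    then have "f'' y \<in> (\<lambda>s. - f s) ` {0..1}" using H(2) by blast
    then obtain s where "s \<in> {0..1}" "f'' y = - f s" by auto
    then show "z \<in> f ` {0..1}" using y by auto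
  qed
  moreover have "\<exists>y. PM (\<lambda>s. - f'' s) (n - 2) y" using H(5) PM_neg by blast
  moreover have "\<forall>s\<in>{0..1}. f s = - f'' (Z s)" using H(7) by (metis minus_minus)
  ultimately show ?thesis using H(3,4,6) by (intro exI[of _ "\<lambda>s. - f'' s"] exI[of _ Z]) auto
qed

lemma ZIG_UNI:
  assumes "ZIG Z" shows "UNI Z"
proof -
  obtain p q where "0 \<le> p" "p \<le> q" "q \<le> 1" "strict_mono_on {0..p} Z" "strict_antimono_on {p..q} Z"
       "strict_mono_on {q..1} Z" "Z q < Z p"
    using assms unfolding ZIG_def by blast
  then show ?thesis using zigzag[of Z p q] assms unfolding ZIG_def by blast
qed

lemma main_UNI:
  "\<forall>f x. continuous_on {0..1} f \<longrightarrow> f ` {0..1} \<subseteq> {0..1} \<longrightarrow> f 0 = 0 \<longrightarrow> f 1 = 1 \<longrightarrow> 1 \<le> n \<longrightarrow>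
     PM f n x \<longrightarrow> UNI f"
proof (induction n rule: less_induct)
  case (less n)
  show ?case
  proof (intro allI impI)
    fix f :: "real \<Rightarrow> real" and x :: "nat \<Rightarrow> real"
    assume fc: "continuous_on {0..1} f" and fr: "f ` {0..1} \<subseteq> {0..1}" and f0: "f 0 = 0" and f1: "f 1 = 1"
      and n1: "1 \<le> n" and P: "PM f n x"
    have inc: "\<forall>i<n. x i < x (Suc i)" using P unfolding PM_def by blast
    have pc: "\<forall>i<n. strict_mono_on {x i..x (Suc i)} f \<or> strict_antimono_on {x i..x (Suc i)} f"
      using P unfolding PM_def by blast
    have x0: "x 0 = 0" and xn: "x n = 1" using P unfolding PM_def by auto
    have frr: "0 \<le> f s \<and> f s \<le> 1" if "0 \<le> s" "s \<le> 1" for s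
    proof -
      have "s \<in> {0..1}" using that by simp
      then have "f s \<in> {0..1}" using fr by blast
      then show ?thesis by simp
    qed
    have fxr: "0 \<le> f (x i) \<and> f (x i) \<le> 1" if "i \<le> n" for i
      by (rule frr) (rule PM_range[OF P that])+
    define Mo where "Mo = (\<lambda>i. strict_mono_on {x i..x (Suc i)} f)"
    define An where "An = (\<lambda>i. strict_antimono_on {x i..x (Suc i)} f)"
    have MoV: "f (x i) < f (x (Suc i))" if "Mo i" "i < n" for i
    proof -
      have "x i < x (Suc i)" using inc that(2) by blast
      then have m: "x i \<in> {x i..x (Suc i)}" "x (Suc i) \<in> {x i..x (Suc i)}" by auto
      show ?thesis using monotone_onD[OF that(1)[unfolded Mo_def] m] \<open>x i < x (Suc i)\<close> by simp
    qed
    have AnV: "f (x (Suc i)) < f (x i)" if "An i" "i < n" for i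
    proof -
      have "x i < x (Suc i)" using inc that(2) by blast
      then have m: "x i \<in> {x i..x (Suc i)}" "x (Suc i) \<in> {x i..x (Suc i)}" by auto
      show ?thesis using monotone_onD[OF that(1)[unfolded An_def] m] \<open>x i < x (Suc i)\<close> by simp
    qed
    show "UNI f"
    proof (cases "n = 1")
      case True
      have "Mo 0 \<or> An 0" using pc True unfolding Mo_def An_def by auto
      moreover have "\<not> An 0" using AnV[of 0] True x0 xn f0 f1 by auto
      ultimately have "strict_mono_on {0..1} f" using True x0 xn unfolding Mo_def by auto
      then show ?thesis using base_UNI fc f0 f1 by blast
    next
      case False
      then have n2: "2 \<le> n" using n1 by auto
      show ?thesis
      proof (cases "\<exists>i. Suc i < n \<and> ((Mo i \<and> Mo (Suc i)) \<or> (An i \<and> An (Suc i)))")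
        case True
        then obtain i where i: "Suc i < n" "(Mo i \<and> Mo (Suc i)) \<or> (An i \<and> An (Suc i))" by blast
        have "PM f (n - 1) (\<lambda>k. if k \<le> i then x k else x (Suc k))"
          by (rule merge_PM[OF P i(1)]) (use i(2) in \<open>simp add: Mo_def An_def\<close>)
        moreover have "n - 1 < n" "1 \<le> n - 1" using n2 by auto
        ultimately show ?thesis using less.IH fc fr f0 f1 by blast
      next
        case False
        then have alt: "\<And>i. Suc i < n \<Longrightarrow> \<not> (Mo i \<and> Mo (Suc i)) \<and> \<not> (An i \<and> An (Suc i))" by blast
        have MA: "Mo i \<or> An i" if "i < n" for i using pc that unfolding Mo_def An_def by auto
        have MoA: "An (Suc i)" if "Mo i" "Suc i < n" for i using alt[OF that(2)] MA[OF that(2)] that(1) by blast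
        have AnM: "Mo (Suc i)" if "An i" "Suc i < n" for i using alt[OF that(2)] MA[OF that(2)] that(1) by blast
        have Mo0: "Mo 0"
        proof (rule ccontr)
          assume "\<not> Mo 0"
          then have "An 0" using MA n1 by auto
          then have "f (x 1) < 0" using AnV[of 0] n1 x0 f0 by auto
          then show False using fxr[of 1] n1 by auto
        qed
        have Mon: "Mo (n - 1)"
        proof (rule ccontr)
          assume "\<not> Mo (n - 1)"
          moreover have "n - 1 < n" using n1 by auto
          ultimately have "An (n - 1)" using MA by blast
          then have "1 < f (x (n - 1))" using AnV[of "n - 1"] n1 xn f1 by auto
          then show False using fxr[of "n - 1"] by auto
        qed
        have n3: "3 \<le> n"
        proof (rule ccontr)
          assume "\<not> 3 \<le> n"
          then have "n = 2" using n2 by auto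
          then show False using alt[of 0] Mo0 Mon by auto
        qed
        define L where "L = (\<lambda>i. \<bar>f (x (Suc i)) - f (x i)\<bar>)"
        define K where "K = {k. Suc (Suc (Suc k)) \<le> n}"
        have Kf: "finite K" unfolding K_def by (rule finite_subset[of _ "{..n}"]) auto
        have K0: "0 \<in> K" unfolding K_def using n3 by auto
        obtain k where kK: "k \<in> K" and kmin: "L (Suc k) = Min ((\<lambda>k. L (Suc k)) ` K)"
        proof -
          have "Min ((\<lambda>k. L (Suc k)) ` K) \<in> (\<lambda>k. L (Suc k)) ` K"
            by (rule Min_in) (use Kf K0 in auto)
          then show ?thesis using that by (metis (no_types, lifting) imageE)
        qed
        have kle: "L (Suc k) \<le> L (Suc k')" if "k' \<in> K" for k'
          unfolding kmin using Kf that by (auto intro: Min_le)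
        have kn: "Suc (Suc (Suc k)) \<le> n" using kK unfolding K_def by auto
        have Lleft: "L (Suc k) \<le> L k"
        proof (cases k)
          case 0
          have "An 1" using MoA[OF Mo0] n3 by auto
          then have "f (x 2) < f (x 1)" using AnV[of 1] n3 by (auto simp: numeral_2_eq_2)
          moreover have "0 < f (x 1)" using MoV[OF Mo0] n3 x0 f0 by auto
          moreover have "0 \<le> f (x 2)" using fxr[of 2] n3 by auto
          ultimately show ?thesis unfolding L_def 0 using x0 f0 by (auto simp: numeral_2_eq_2)
        next
          case (Suc k'')
          then have "k'' \<in> K" using kK unfolding K_def by auto
          then show ?thesis using kle Suc by auto
        qed
        have Lright: "L (Suc k) \<le> L (Suc (Suc k))"
        proof (cases "Suc k \<in> K")
          case True then show ?thesis using kle by auto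
        next
          case False
          then have nk: "n = Suc (Suc (Suc k))" using kn unfolding K_def by auto
          have M2: "Mo (Suc (Suc k))" using Mon nk by auto
          have A1: "An (Suc k)"
          proof (rule ccontr)
            assume "\<not> An (Suc k)" then have "Mo (Suc k)" using MA[of "Suc k"] nk by auto
            then show False using alt[of "Suc k"] M2 nk by auto
          qed
          have "f (x (Suc (Suc k))) < f (x (Suc k))" using AnV[OF A1] nk by auto
          moreover have "f (x (Suc (Suc k))) < f (x (Suc (Suc (Suc k))))" using MoV[OF M2] nk by auto
          moreover have "f (x (Suc (Suc (Suc k)))) = 1" using nk xn f1 by auto
          moreover have "f (x (Suc k)) \<le> 1" using fxr[of "Suc k"] nk by auto
          ultimately show ?thesis unfolding L_def by auto
        qed
        have Pc: "\<exists>f' Z. continuous_on {0..1} f' \<and> f' ` {0..1} \<subseteq> f ` {0..1} \<and> f' 0 = f 0 \<and> f' 1 = f 1 \<and>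
           (\<exists>y. PM f' (n - 2) y) \<and> ZIG Z \<and> (\<forall>s\<in>{0..1}. f s = f' (Z s))"
        proof (cases "An (Suc k)")
          case True
          have M0: "Mo k"
          proof (rule ccontr)
            assume "\<not> Mo k" then have "An k" using MA[of k] kn by auto
            then show False using alt[of k] True kn by auto
          qed
          have M2: "Mo (Suc (Suc k))" using AnM[OF True] kn by auto
          have v1: "f (x k) < f (x (Suc k))" using MoV[OF M0] kn by auto
          have v2: "f (x (Suc (Suc k))) < f (x (Suc k))" using AnV[OF True] kn by auto
          have v3: "f (x (Suc (Suc k))) < f (x (Suc (Suc (Suc k))))" using MoV[OF M2] kn by auto
          have c1: "f (x k) \<le> f (x (Suc (Suc k)))" using Lleft v1 v2 unfolding L_def by auto
          have c2: "f (x (Suc k)) \<le> f (x (Suc (Suc (Suc k))))" using Lright v2 v3 unfolding L_def by auto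
          have xr: "0 \<le> x k" "x (Suc (Suc (Suc k))) \<le> 1" using PM_range[OF P] kn by auto
          have xi: "x k < x (Suc k)" "x (Suc k) < x (Suc (Suc k))" "x (Suc (Suc k)) < x (Suc (Suc (Suc k)))"
            using inc kn by auto
          have cc1: "continuous_on {x k..x (Suc k)} f" using fc by (rule continuous_on_subset) (use xr xi in auto)
          have cc3: "continuous_on {x (Suc (Suc k))..x (Suc (Suc (Suc k)))} f"
            using fc by (rule continuous_on_subset) (use xr xi in auto)
          obtain u where u: "x k \<le> u" "u \<le> x (Suc k)" "f u = f (x (Suc (Suc k)))"
            using IVT'[OF c1 _ _ cc1] v2 xi by (auto simp: less_imp_le)
          obtain w where w: "x (Suc (Suc k)) \<le> w" "w \<le> x (Suc (Suc (Suc k)))" "f w = f (x (Suc k))"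
            using IVT'[OF _ c2 _ cc3] v2 xi by (auto simp: less_imp_le)
          show ?thesis
            by (rule fold_core[OF fc P kn _ _ _ u w]) (use M0 True M2 in \<open>simp_all add: Mo_def An_def\<close>)
        next
          case False
          then have M1: "Mo (Suc k)" using MA[of "Suc k"] kn by auto
          have A0: "An k"
          proof (rule ccontr)
            assume "\<not> An k" then have "Mo k" using MA[of k] kn by auto
            then show False using alt[of k] M1 kn by auto
          qed
          have A2: "An (Suc (Suc k))" using MoA[OF M1] kn by auto
          have v1: "f (x (Suc k)) < f (x k)" using AnV[OF A0] kn by auto
          have v2: "f (x (Suc k)) < f (x (Suc (Suc k)))" using MoV[OF M1] kn by auto
          have v3: "f (x (Suc (Suc (Suc k)))) < f (x (Suc (Suc k)))" using AnV[OF A2] kn by auto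
          have c1: "f (x (Suc (Suc k))) \<le> f (x k)" using Lleft v1 v2 unfolding L_def by auto
          have c2: "f (x (Suc (Suc (Suc k)))) \<le> f (x (Suc k))" using Lright v2 v3 unfolding L_def by auto
          have xr: "0 \<le> x k" "x (Suc (Suc (Suc k))) \<le> 1" using PM_range[OF P] kn by auto
          have xi: "x k < x (Suc k)" "x (Suc k) < x (Suc (Suc k))" "x (Suc (Suc k)) < x (Suc (Suc (Suc k)))"
            using inc kn by auto
          have cc1: "continuous_on {x k..x (Suc k)} f" using fc by (rule continuous_on_subset) (use xr xi in auto)
          have cc3: "continuous_on {x (Suc (Suc k))..x (Suc (Suc (Suc k)))} f"
            using fc by (rule continuous_on_subset) (use xr xi in auto)
          obtain u where u: "x k \<le> u" "u \<le> x (Suc k)" "f u = f (x (Suc (Suc k)))"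
            using IVT2'[OF _ c1 _ cc1] v2 xi by (auto simp: less_imp_le)
          obtain w where w: "x (Suc (Suc k)) \<le> w" "w \<le> x (Suc (Suc (Suc k)))" "f w = f (x (Suc k))"
            using IVT2'[OF c2 _ _ cc3] v2 xi by (auto simp: less_imp_le)
          show ?thesis
            by (rule fold_core_anti[OF fc P kn _ _ _ u w]) (use A0 M1 A2 in \<open>simp_all add: Mo_def An_def\<close>)
        qed
        then obtain f' Z y where H: "continuous_on {0..1} f'" "f' ` {0..1} \<subseteq> f ` {0..1}" "f' 0 = f 0"
          "f' 1 = f 1" "PM f' (n - 2) y" "ZIG Z" "\<forall>s\<in>{0..1}. f s = f' (Z s)" by blast
        have "f' ` {0..1} \<subseteq> {0..1}" using H(2) fr by blast
        moreover have "n - 2 < n" "1 \<le> n - 2" using n3 by auto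
        ultimately have "UNI f'" using less.IH H(1,3,4,5) f0 f1 by metis
        then show ?thesis using compose_UNI ZIG_UNI[OF H(6)] H(7) by blast
      qed
    qed
  qed
qed

theorem theorem3:
  fixes f1 f2 :: "real \<Rightarrow> real"
  assumes "continuous_on {0..1} f1" and "f1 ` {0..1} \<subseteq> {0..1}"
    and "continuous_on {0..1} f2" and "f2 ` {0..1} \<subseteq> {0..1}"
    and "f1 0 = 0" and "f2 0 = 0" and "f1 1 = 1" and "f2 1 = 1"
    and "f1 \<in> class_U"
  shows "\<exists>g1 g2 :: real \<Rightarrow> real.
           continuous_on {0..1} g1 \<and> g1 ` {0..1} \<subseteq> {0..1} \<and>
           continuous_on {0..1} g2 \<and> g2 ` {0..1} \<subseteq> {0..1} \<and>
           g1 0 = 0 \<and> g2 0 = 0 \<and> g1 1 = 1 \<and> g2 1 = 1 \<and>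
           (\<forall>t\<in>{0..1}. f1 (g1 t) = f2 (g2 t))"
proof -
  have "piecewise_monotone f1" using assms(9) unfolding class_U_def by blast
  then obtain x n where "1 \<le> n" "PM f1 n x" unfolding piecewise_monotone_def PM_def by blast
  then have "UNI f1" using main_UNI assms(1,2,5,7) by blast
  then show ?thesis unfolding UNI_def using assms(3,4,6,8) by blast
qed

end
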